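(* For every $i\in X\setminus\{r+1,n-r\}$ the relations $F_X^+E_i-E_iF_X^+=0$ and $F_X^+F_i-F_iF_X^+=0$ hold in $U_q(\mathfrak g)$.
   Context: Let $\mathbb K$ be a field of characteristic zero and $q$ an indeterminate. $n\ge1$, $I=\{1,\dots,n\}$, $\mathfrak g=\mathfrak{sl}_{n+1}(\mathbb C)$ with simple roots $\alpha_i$, fundamental weights $\varpi_i$, weight lattice $P$, Cartan matrix $a_{ii}=2$, $a_{ij}=-1$ if $|i-j|=1$, $a_{ij}=0$ otherwise, form $(\alpha_i,\alpha_j)=a_{ij}$, $(\alpha_i,\varpi_j)=\delta_{ij}$. $U_q(\mathfrak g)$ is the $\mathbb K(q^{1/2})$-algebra generated by $E_i,F_i$ ($i\in I$), $K_\mu$ ($\mu\in P$) with $K_0=1$, $K_\mu K_\lambda=K_{\mu+\lambda}$, $K_\mu E_i=q^{(\alpha_i,\mu)}E_iK_\mu$, $K_\mu F_i=q^{-(\alpha_i,\mu)}F_iK_\mu$, $E_iF_j-F_jE_i=\delta_{ij}\frac{K_i-K_i^{-1}}{q-q^{-1}}$ ($K_i=K_{\alpha_i}$), and quantum Serre relations $E_iE_j=E_jE_i$, $F_iF_j=F_jF_i$ if $a_{ij}=0$, $p(E_i,E_j)=p(F_i,F_j)=0$ if $a_{ij}=-1$, with $p(x,y)=x^2y-(q+q^{-1})xyx+yx^2$. Write $[a,b]_c=ab-cba$. Fix $r$ with $1\le r\le\lceil n/2\rceil-1$ and $X=\{r+1,\dots,n-r\}$. Put $F_X^+=[F_{r+1},[F_{r+2},\dots,[F_{n-r-1},F_{n-r}]_q\dots]_q]_q$.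 *)

theory Defs
  imports "HOL-Computational_Algebra.Polynomial" "HOL-Computational_Algebra.Fraction_Field"
begin

(* The base field K(q^{1/2}): rational functions over K in an indeterminate t = q^{1/2}. *)
type_synonym 'k qfield = "'k poly fract"

definition qhalf :: "('k::field_char_0) qfield" where
  "qhalf = Fract [:0, 1:] 1"

definition qq :: "('k::field_char_0) qfield" where
  "qq = qhalf ^ 2"

(* Cartan matrix of sl_{n+1}, indices in I = {1..n} *)
definition cartan :: "nat \<Rightarrow> nat \<Rightarrow> int" where
  "cartan i j = (if i = j then 2 else if i = j + 1 \<or> j = i + 1 then -1 else 0)"

(* Weight lattice P: a weight mu = sum_j mu j * varpi_j, coordinates in the fundamental weight basis *)
definition wlat :: "nat \<Rightarrow> (nat \<Rightarrow> int) set" where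
  "wlat n = {mu. \<forall>j. j \<notin> {1..n} \<longrightarrow> mu j = 0}"

(* simple root alpha_i = sum_j a_{ji} varpi_j *)
definition sroot :: "nat \<Rightarrow> nat \<Rightarrow> (nat \<Rightarrow> int)" where
  "sroot n i = (\<lambda>j. if j \<in> {1..n} then cartan j i else 0)"

(* (alpha_i, mu) for mu in P; since (alpha_i, varpi_j) = delta_ij this is the i-th coordinate *)
definition rootpair :: "nat \<Rightarrow> (nat \<Rightarrow> int) \<Rightarrow> int" where
  "rootpair i mu = mu i"

(* phi: structure map of a K(q^{1/2})-algebra, i.e. unital ring hom into the centre *)
definition scalar_map :: "('k::field_char_0 qfield \<Rightarrow> 'a::ring_1) \<Rightarrow> bool" where
  "scalar_map phi \<longleftrightarrow> phi 1 = 1 \<and> (\<forall>x y. phi (x + y) = phi x + phi y)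
     \<and> (\<forall>x y. phi (x * y) = phi x * phi y) \<and> (\<forall>c z. phi c * z = z * phi c)"

definition qbr :: "('k::field_char_0 qfield \<Rightarrow> 'a::ring_1) \<Rightarrow> 'k qfield \<Rightarrow> 'a \<Rightarrow> 'a \<Rightarrow> 'a" where
  "qbr phi c a b = a * b - phi c * b * a"

definition serre :: "('k::field_char_0 qfield \<Rightarrow> 'a::ring_1) \<Rightarrow> 'a \<Rightarrow> 'a \<Rightarrow> 'a" where
  "serre phi x y = x * x * y - phi (qq + inverse qq) * x * y * x + y * x * x"

definition uq_rels :: "nat \<Rightarrow> ('k::field_char_0 qfield \<Rightarrow> 'a::ring_1) \<Rightarrow> (nat \<Rightarrow> 'a) \<Rightarrow> (nat \<Rightarrow> 'a)
    \<Rightarrow> ((nat \<Rightarrow> int) \<Rightarrow> 'a) \<Rightarrow> bool" where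
  "uq_rels n phi E F K \<longleftrightarrow>
     scalar_map phi
   \<and> K (\<lambda>_. 0) = 1
   \<and> (\<forall>mu \<in> wlat n. \<forall>la \<in> wlat n. K mu * K la = K (\<lambda>j. mu j + la j))
   \<and> (\<forall>mu \<in> wlat n. \<forall>i \<in> {1..n}. K mu * E i = phi (qq powi rootpair i mu) * E i * K mu)
   \<and> (\<forall>mu \<in> wlat n. \<forall>i \<in> {1..n}. K mu * F i = phi (qq powi (- rootpair i mu)) * F i * K mu)
   \<and> (\<forall>i \<in> {1..n}. \<forall>j \<in> {1..n}. E i * F j - F j * E i =
        (if i = j then (K (sroot n i) - K (\<lambda>k. - sroot n i k)) * phi (inverse (qq - inverse qq)) else 0))
   \<and> (\<forall>i \<in> {1..n}. \<forall>j \<in> {1..n}. cartan i j = 0 \<longrightarrow> E i * E j = E j * E i \<and> F i * F j = F j * F i)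
   \<and> (\<forall>i \<in> {1..n}. \<forall>j \<in> {1..n}. cartan i j = -1 \<longrightarrow> serre phi (E i) (E j) = 0 \<and> serre phi (F i) (F j) = 0)"

definition FXplus :: "('k::field_char_0 qfield \<Rightarrow> 'a::ring_1) \<Rightarrow> (nat \<Rightarrow> 'a) \<Rightarrow> nat \<Rightarrow> nat \<Rightarrow> 'a" where
  "FXplus phi F n r = foldr (\<lambda>j acc. qbr phi qq (F j) acc) [r+1..<n-r] (F (n - r))"

end

theory Submission
  imports Defs
begin

lemma qq_eq: "(qq :: 'k::field_char_0 qfield) = Fract [:0,0,1:] 1"
  by (simp add: qq_def qhalf_def power2_eq_square)
lemma qq_nz: "(qq :: 'k::field_char_0 qfield) \<noteq> 0"
  by (simp add: qq_eq Zero_fract_def eq_fract)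
lemma qq2_nz: "(qq * qq + 1 :: 'k::field_char_0 qfield) \<noteq> 0"
proof -
  have "qq * qq + (1 :: 'k qfield) = Fract ([:0,0,1:] * [:0,0,1:] + 1) 1"
    by (simp add: qq_eq One_fract_def)
  moreover have "([:0,0,1:] * [:0,0,1:] + 1 :: 'k poly) \<noteq> 0"
  proof
    assume "([:0,0,1:] * [:0,0,1:] + 1 :: 'k poly) = 0"
    then have "poly ([:0,0,1:] * [:0,0,1:] + 1 :: 'k poly) 0 = 0" by simp
    then show False by simp
  qed
  ultimately show ?thesis by (simp add: Zero_fract_def eq_fract)
qed
lemma sm_facts:
  assumes "scalar_map phi"
  shows "phi 0 = 0" "phi (- a) = - phi a" "phi (a - b) = phi a - phi b"
    "phi (a * b) = phi a * phi b" "phi (a + b) = phi a + phi b" "phi c * z = z * phi c" "phi 1 = 1"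
proof -
  have add: "\<And>a b. phi (a + b) = phi a + phi b" using assms unfolding scalar_map_def by blast
  have mul: "\<And>a b. phi (a * b) = phi a * phi b" using assms unfolding scalar_map_def by blast
  have cen: "\<And>c z. phi c * z = z * phi c" using assms unfolding scalar_map_def by blast
  have one: "phi 1 = 1" using assms unfolding scalar_map_def by blast
  have z: "phi 0 = 0" using add[of 0 0] by simp
  have n: "phi (- a) = - phi a" for a
  proof -
    have "phi a + phi (- a) = 0" using add[of a "- a"] z by simp
    then show ?thesis by (rule minus_unique[symmetric])
  qed
  show "phi 0 = 0" by (fact z)
  show "phi (- a) = - phi a" by (fact n)
  show "phi (a - b) = phi a - phi b" using add[of a "- b"] n by simp
  show "phi (a * b) = phi a * phi b" by (fact mul)
  show "phi (a + b) = phi a + phi b" by (fact add)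
  show "phi c * z = z * phi c" by (fact cen)
  show "phi 1 = 1" by (fact one)
qed

lemma comm_qbr:
  assumes "scalar_map phi" "X * A = A * X" "X * B = B * X"
  shows "X * qbr phi c A B = qbr phi c A B * X"
proof -
  have cen: "X * phi c = phi c * X" using sm_facts(6)[OF assms(1)] by metis
  have 1: "X * (A * B) = A * B * X"
  proof -
    have "X * (A * B) = (X * A) * B" by (simp add: mult.assoc)
    also have "\<dots> = A * (X * B)" by (simp add: assms(2) mult.assoc)
    also have "\<dots> = A * B * X" by (simp add: assms(3) mult.assoc)
    finally show ?thesis .
  qed
  have 2: "X * (phi c * B * A) = phi c * B * A * X"
  proof -
    have "X * (phi c * B * A) = phi c * (X * B) * A" by (simp add: cen mult.assoc[symmetric])
    also have "\<dots> = phi c * B * (X * A)" by (simp add: assms(3) mult.assoc)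
    also have "\<dots> = phi c * B * A * X" by (simp add: assms(2) mult.assoc)
    finally show ?thesis .
  qed
  have "X * qbr phi c A B = X*(A*B) - X*(phi c*B*A)" by (simp add: qbr_def right_diff_distrib)
  also have "\<dots> = A*B*X - phi c*B*A*X" by (simp only: 1 2)
  also have "\<dots> = qbr phi c A B * X" by (simp add: qbr_def left_diff_distrib)
  finally show ?thesis .
qed

lemma comm_fold:
  assumes "scalar_map phi" "\<forall>j\<in>set js. X * F j = F j * X" "X * B = B * X"
  shows "X * foldr (\<lambda>j acc. qbr phi qq (F j) acc) js B = foldr (\<lambda>j acc. qbr phi qq (F j) acc) js B * X"
  using assms(2)
proof (induction js)
  case Nil
  then show ?case using assms(3) by simp
next
  case (Cons a js)
  then show ?case by (simp add: comm_qbr[OF assms(1)])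
qed

lemma shift_qbr:
  assumes "scalar_map phi" "K * A = phi d * A * K" "K * B = B * K"
  shows "K * qbr phi c A B = phi d * qbr phi c A B * K"
proof -
  have cen: "K * phi c = phi c * K" "B * phi d = phi d * B" "phi c * phi d = phi d * phi c"
    using sm_facts(6)[OF assms(1)] by metis+
  have 1: "K * (A * B) = phi d * (A * B) * K"
  proof -
    have "K * (A * B) = (K * A) * B" by (simp add: mult.assoc)
    also have "\<dots> = phi d * A * (K * B)" by (simp add: assms(2) mult.assoc)
    also have "\<dots> = phi d * (A * B) * K" by (simp add: assms(3) mult.assoc)
    finally show ?thesis .
  qed
  have 2: "K * (phi c * B * A) = phi d * (phi c * B * A) * K"
  proof -
    have "K * (phi c * B * A) = phi c * (K * B) * A" by (simp add: cen mult.assoc[symmetric])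
    also have "\<dots> = phi c * B * (K * A)" by (simp add: assms(3) mult.assoc)
    also have "\<dots> = phi c * (B * phi d) * A * K" by (simp add: assms(2) mult.assoc)
    also have "\<dots> = (phi c * phi d) * B * A * K" by (simp add: cen(2) mult.assoc)
    also have "\<dots> = phi d * (phi c * B * A) * K" by (simp add: cen(3) mult.assoc)
    finally show ?thesis .
  qed
  have "K * qbr phi c A B = K*(A*B) - K*(phi c*B*A)" by (simp add: qbr_def right_diff_distrib)
  also have "\<dots> = phi d*(A*B)*K - phi d*(phi c*B*A)*K" by (simp only: 1 2)
  also have "\<dots> = phi d * qbr phi c A B * K" by (simp add: qbr_def right_diff_distrib left_diff_distrib)
  finally show ?thesis .
qed

lemma shift_fold:
  assumes "scalar_map phi" "K * A = phi d * A * K" "\<forall>j\<in>set js. K * F j = F j * K" "K * B = B * K"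
  shows "K * qbr phi qq A (foldr (\<lambda>j acc. qbr phi qq (F j) acc) js B)
     = phi d * qbr phi qq A (foldr (\<lambda>j acc. qbr phi qq (F j) acc) js B) * K"
  by (rule shift_qbr[OF assms(1,2)]) (rule comm_fold[OF assms(1,3,4)])

lemma serre_identity:
  fixes Q x y z :: "'a::ring_1"
  assumes c: "\<And>w. Q * w = w * Q" and xz: "x * z = z * x"
  shows "(Q*Q+1) * (y * (x*y*z - Q*x*z*y - Q*y*z*x + Q*Q*z*y*x) - (x*y*z - Q*x*z*y - Q*y*z*x + Q*Q*z*y*x)*y)
   = - (Q*(y*y*x) - (Q*Q+1)*(y*x*y) + Q*(x*y*y))*z + Q*Q*z*(Q*(y*y*x) - (Q*Q+1)*(y*x*y) + Q*(x*y*y))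
     - Q*Q*(Q*(y*y*z) - (Q*Q+1)*(y*z*y) + Q*(z*y*y))*x + x*(Q*(y*y*z) - (Q*Q+1)*(y*z*y) + Q*(z*y*y))"
proof -
  have c2: "\<And>a b. a * (Q * b) = Q * (a * b)" by (metis c mult.assoc)
  have c3: "\<And>a. a * Q = Q * a" using c by metis
  have zx: "\<And>b. z * (x * b) = x * (z * b)" by (metis xz mult.assoc)
  show ?thesis by (simp add: algebra_simps c2[of x] c2[of y] c2[of z] c3[of x] c3[of y] c3[of z] zx xz)
qed

lemma reassoc_identity:
  fixes Q x y z w :: "'a::ring_1"
  assumes c: "\<And>v. Q * v = v * Q" and xw: "x * w = w * x" and yw: "y * w = w * y"
  shows "x * (y * (z * w - Q * w * z) - Q * (z * w - Q * w * z) * y) -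
    Q * (y * (z * w - Q * w * z) - Q * (z * w - Q * w * z) * y) * x
   = (x * (y * z - Q * z * y) - Q * (y * z - Q * z * y) * x) * w -
    Q * w * (x * (y * z - Q * z * y) - Q * (y * z - Q * z * y) * x)"
proof -
  have c2: "\<And>a b. a * (Q * b) = Q * (a * b)" by (metis c mult.assoc)
  have c3: "\<And>a. a * Q = Q * a" using c by metis
  have wx: "\<And>b. w * (x * b) = x * (w * b)" by (metis xw mult.assoc)
  have wy: "\<And>b. w * (y * b) = y * (w * b)" by (metis yw mult.assoc)
  have wx': "w * x = x * w" using xw by simp
  have wy': "w * y = y * w" using yw by simp
  show ?thesis by (simp add: algebra_simps c2[of x] c2[of y] c2[of z] c2[of w] c3[of x] c3[of y] c3[of z] c3[of w]
     wx wy wx' wy')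
qed

lemma E_comp:
  fixes E x y Z Kp Km c Q Qi :: "'a::ring_1"
  assumes cc: "\<And>w. c * w = w * c" and cQ: "\<And>w. Q * w = w * Q" and cQi: "\<And>w. Qi * w = w * Qi"
    and Ex: "E * x = x * E" and EZ: "E * Z = Z * E" and Ey: "E * y - y * E = (Kp - Km) * c"
    and KpZ: "Kp * Z = Q * Z * Kp" and KmZ: "Km * Z = Qi * Z * Km" and Kmx: "Km * x = Qi * x * Km"
    and xZ: "x * Z = Z * x" and QQi: "Q * Qi = 1"
  shows "E * (x * (y * Z - Q * Z * y) - Q * (y * Z - Q * Z * y) * x)
       = (x * (y * Z - Q * Z * y) - Q * (y * Z - Q * Z * y) * x) * E"
proof -
  have A: "\<And>X. X * c = c * X" "\<And>X w. X * (c * w) = c * (X * w)"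
    "\<And>X. X * Q = Q * X" "\<And>X w. X * (Q * w) = Q * (X * w)"
    "\<And>X. X * Qi = Qi * X" "\<And>X w. X * (Qi * w) = Qi * (X * w)"
    subgoal using cc by metis
    subgoal by (metis cc mult.assoc)
    subgoal using cQ by metis
    subgoal by (metis cQ mult.assoc)
    subgoal using cQi by metis
    subgoal by (metis cQi mult.assoc)
    done
  have S: "Q * (Qi * w) = w" "Qi * (Q * w) = w" "Qi * Q = 1" for w
    subgoal by (metis QQi mult.assoc mult_1)
    subgoal by (metis QQi cQ mult.assoc mult_1)
    subgoal by (metis QQi cQ)
    done
  have Ey': "E * y = y * E + Kp * c - Km * c" using Ey by (simp add: algebra_simps)
  have R: "E * (x * w) = x * (E * w)" "E * (Z * w) = Z * (E * w)" "E * (y * w) = y * (E * w) + Kp * (c * w) - Km * (c * w)"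
    "Kp * (Z * w) = Q * (Z * (Kp * w))" "Km * (Z * w) = Qi * (Z * (Km * w))" "Km * (x * w) = Qi * (x * (Km * w))"
    "x * (Z * w) = Z * (x * w)" for w
    subgoal by (metis Ex mult.assoc)
    subgoal by (metis EZ mult.assoc)
    subgoal proof -
      have "E * (y * w) = (E * y) * w" by (simp only: mult.assoc)
      also have "\<dots> = y * (E * w) + Kp * (c * w) - Km * (c * w)" by (simp only: Ey' distrib_right left_diff_distrib mult.assoc)
      finally show ?thesis .
    qed
    subgoal by (metis KpZ mult.assoc)
    subgoal by (metis KmZ mult.assoc)
    subgoal by (metis Kmx mult.assoc)
    subgoal by (metis xZ mult.assoc)
    done
  show ?thesis
    by (simp add: algebra_simps A(1)[of E] A(1)[of x] A(1)[of y] A(1)[of Z] A(1)[of Kp] A(1)[of Km]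
      A(2)[of E] A(2)[of x] A(2)[of y] A(2)[of Z] A(2)[of Kp] A(2)[of Km]
      A(3)[of E] A(3)[of x] A(3)[of y] A(3)[of Z] A(3)[of Kp] A(3)[of Km]
      A(4)[of E] A(4)[of x] A(4)[of y] A(4)[of Z] A(4)[of Kp] A(4)[of Km]
      A(5)[of E] A(5)[of x] A(5)[of y] A(5)[of Z] A(5)[of Kp] A(5)[of Km]
      A(6)[of E] A(6)[of x] A(6)[of y] A(6)[of Z] A(6)[of Kp] A(6)[of Km]
      A(1)[of Q] A(2)[of Q] A(1)[of Qi] A(2)[of Qi] S QQi R Ex EZ Ey' KpZ KmZ Kmx xZ)
qed

lemma serre_comm:
  assumes sm: "scalar_map phi" and S1: "serre phi y x = 0" and S2: "serre phi y z = 0" and xz: "x * z = z * x"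
  shows "y * qbr phi (qq::'k::field_char_0 qfield) x (qbr phi qq y z) = qbr phi qq x (qbr phi qq y z) * (y::'a::ring_1)"
proof -
  define Q where "Q = phi qq"
  have c: "\<And>w. Q * w = w * Q" unfolding Q_def using sm_facts(6)[OF sm] by blast
  have QL: "Q * phi (qq + inverse qq) = Q * Q + 1"
  proof -
    have "Q * phi (qq + inverse qq) = phi (qq * (qq + inverse qq))" unfolding Q_def by (simp only: sm_facts(4)[OF sm])
    also have "(qq::'k qfield) * (qq + inverse qq) = qq * qq + 1" using qq_nz[where 'k='k] by (simp add: distrib_left)
    also have "phi (qq * qq + 1) = Q * Q + 1" unfolding Q_def by (simp only: sm_facts(4,5,7)[OF sm])
    finally show ?thesis .
  qed
  have QS: "Q*(y*y*u) - (Q*Q+1)*(y*u*y) + Q*(u*y*y) = Q * serre phi y u" for u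
  proof -
    have "Q * serre phi y u = Q*(y*y*u) - (Q * phi (qq + inverse qq))*(y*u*y) + Q*(u*y*y)"
      unfolding serre_def by (simp add: algebra_simps)
    then show ?thesis using QL by simp
  qed
  have QS1: "Q*(y*y*x) - (Q*Q+1)*(y*x*y) + Q*(x*y*y) = 0" using QS[of x] S1 by simp
  have QS2: "Q*(y*y*z) - (Q*Q+1)*(y*z*y) + Q*(z*y*y) = 0" using QS[of z] S2 by simp
  define V where "V = x*y*z - Q*x*z*y - Q*y*z*x + Q*Q*z*y*x"
  have V: "qbr phi qq x (qbr phi qq y z) = V"
  proof -
    have c2: "\<And>a b. a * (Q * b) = Q * (a * b)" by (metis c mult.assoc)
    show ?thesis unfolding V_def qbr_def Q_def[symmetric] by (simp add: algebra_simps c2[of x])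
  qed
  have T0: "(Q*Q+1) * (y * V - V * y) = 0"
    unfolding V_def serre_identity[OF c xz] QS1 QS2 by simp
  have inv: "phi (inverse (qq*qq+1)) * (Q*Q+1) = 1"
  proof -
    have "phi (inverse (qq*qq+1)) * (Q*Q+1) = phi (inverse (qq*qq+1) * (qq*qq+1))"
      unfolding Q_def by (simp only: sm_facts(4,5,7)[OF sm])
    also have "inverse (qq*qq+1) * (qq*qq+1) = (1::'k qfield)" using qq2_nz[where 'k='k] by simp
    finally show ?thesis using sm_facts(7)[OF sm] by simp
  qed
  have "y * V - V * y = phi (inverse (qq*qq+1)) * ((Q*Q+1) * (y * V - V * y))"
    using inv by (simp add: mult.assoc[symmetric])
  then have "y * V - V * y = 0" using T0 by simp
  then show ?thesis using V by simp
qed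

lemma reassoc_qbr:
  assumes sm: "scalar_map phi" and xw: "x * w = w * x" and yw: "y * w = w * y"
  shows "qbr phi (qq::'k::field_char_0 qfield) x (qbr phi qq y (qbr phi qq z w)) = qbr phi qq (qbr phi qq x (qbr phi qq y z)) (w::'a::ring_1)"
proof -
  have c: "\<And>v. phi qq * v = v * phi qq" using sm_facts(6)[OF sm] by blast
  show ?thesis unfolding qbr_def by (rule reassoc_identity[OF c xw yw])
qed

theorem lemma4p1:
  fixes n r :: nat
    and phi :: "('k::field_char_0) qfield \<Rightarrow> 'a::ring_1"
    and E F :: "nat \<Rightarrow> 'a" and K :: "(nat \<Rightarrow> int) \<Rightarrow> 'a"
  assumes "1 \<le> n"
    and "1 \<le> r" and "r \<le> (n + 1) div 2 - 1"
    and "uq_rels n phi E F K"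
    and "i \<in> {r+1..n-r} - {r+1, n-r}"
  shows "FXplus phi F n r * E i - E i * FXplus phi F n r = 0
       \<and> FXplus phi F n r * F i - F i * FXplus phi F n r = 0"
proof -
  define a where "a = r + 1"
  define b where "b = n - r"
  have ai: "a < i" "i < b" using assms(5) by (auto simp: a_def b_def)
  have a2: "2 \<le> a" using assms(2) a_def by simp
  have bn: "b \<le> n" by (simp add: b_def)
  have iI: "i \<in> {1..n}" using ai a2 bn by auto
  have sm: "scalar_map phi" using assms(4) unfolding uq_rels_def by blast
  have KF: "\<forall>mu \<in> wlat n. \<forall>j \<in> {1..n}. K mu * F j = phi (qq powi (- rootpair j mu)) * F j * K mu"
    using assms(4) unfolding uq_rels_def by blast
  have EF: "\<forall>i \<in> {1..n}. \<forall>j \<in> {1..n}. E i * F j - F j * E i =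
        (if i = j then (K (sroot n i) - K (\<lambda>k. - sroot n i k)) * phi (inverse (qq - inverse qq)) else 0)"
    using assms(4) unfolding uq_rels_def by blast
  have FF: "\<forall>i \<in> {1..n}. \<forall>j \<in> {1..n}. cartan i j = 0 \<longrightarrow> E i * E j = E j * E i \<and> F i * F j = F j * F i"
    using assms(4) unfolding uq_rels_def by blast
  have SR: "\<forall>i \<in> {1..n}. \<forall>j \<in> {1..n}. cartan i j = -1 \<longrightarrow> serre phi (E i) (E j) = 0 \<and> serre phi (F i) (F j) = 0"
    using assms(4) unfolding uq_rels_def by blast
  have cen: "\<And>c z. phi c * z = z * phi c" using sm_facts(6)[OF sm] by blast
  have FFc: "F j * F k = F k * F j" if "j \<in> {1..n}" "k \<in> {1..n}" "j + 1 < k \<or> k + 1 < j" for j k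
  proof -
    have "cartan j k = 0" using that by (auto simp: cartan_def)
    then show ?thesis using FF that by blast
  qed
  have EFc: "E i * F j = F j * E i" if "j \<in> {1..n}" "j \<noteq> i" for j
  proof -
    have "E i * F j - F j * E i = 0" using EF iI that by simp
    then show ?thesis by simp
  qed
  have Ey: "E i * F i - F i * E i = (K (sroot n i) - K (\<lambda>k. - sroot n i k)) * phi (inverse (qq - inverse qq))"
    using EF iI by auto
  have wp: "sroot n i \<in> wlat n" "(\<lambda>k. - sroot n i k) \<in> wlat n" by (auto simp: wlat_def sroot_def)
  have Kp: "K (sroot n i) * F j = phi (qq powi (- cartan j i)) * F j * K (sroot n i)" if "j \<in> {1..n}" for j
    using KF wp that by (auto simp: rootpair_def sroot_def)
  have Km: "K (\<lambda>k. - sroot n i k) * F j = phi (qq powi (cartan j i)) * F j * K (\<lambda>k. - sroot n i k)" if "j \<in> {1..n}" for j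
    using KF wp that by (auto simp: rootpair_def sroot_def)
  have Kp_far: "K (sroot n i) * F j = F j * K (sroot n i)" if "j \<in> {1..n}" "i + 1 < j" for j
    using Kp[OF that(1)] that(2) sm_facts(7)[OF sm] by (simp add: cartan_def)
  have Km_far: "K (\<lambda>k. - sroot n i k) * F j = F j * K (\<lambda>k. - sroot n i k)" if "j \<in> {1..n}" "i + 1 < j" for j
    using Km[OF that(1)] that(2) sm_facts(7)[OF sm] by (simp add: cartan_def)
  have Kp_next: "K (sroot n i) * F (i+1) = phi qq * F (i+1) * K (sroot n i)"
    using Kp[of "i+1"] ai bn by (simp add: cartan_def)
  have Km_next: "K (\<lambda>k. - sroot n i k) * F (i+1) = phi (inverse qq) * F (i+1) * K (\<lambda>k. - sroot n i k)"
    using Km[of "i+1"] ai bn by (simp add: cartan_def)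
  have Km_prev: "K (\<lambda>k. - sroot n i k) * F (i-1) = phi (inverse qq) * F (i-1) * K (\<lambda>k. - sroot n i k)"
  proof -
    have c1: "cartan (i-1) i = -1" using ai a2 by (simp add: cartan_def)
    have "i - 1 \<in> {1..n}" using ai a2 bn by auto
    then show ?thesis using Km[of "i-1"] c1 by simp
  qed
  let ?f = "\<lambda>j acc. qbr phi qq (F j) acc"
  define Z where "Z = foldr ?f [i+1..<b] (F b)"
  define W where "W = qbr phi qq (F (i-1)) (qbr phi qq (F i) Z)"
  have FXeq: "FXplus phi F n r = foldr ?f [a..<i-1] W"
  proof -
    have "[a..<b] = [a..<i-1] @ [i-1..<b]"
    proof -
      have "[a..<b] = [a..<(i-1) + (b - (i-1))]" using ai by simp
      also have "\<dots> = [a..<i-1] @ [i-1..<(i-1)+(b-(i-1))]" by (rule upt_add_eq_append) (use ai in simp)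
      also have "\<dots> = [a..<i-1] @ [i-1..<b]" using ai by simp
      finally show ?thesis .
    qed
    moreover have "[i-1..<b] = (i-1) # i # [i+1..<b]"
    proof -
      have i1: "Suc (i - 1) = i" using ai by simp
      have "[i-1..<b] = (i-1) # [Suc (i-1)..<b]" by (rule upt_conv_Cons) (use ai in simp)
      also have "[Suc (i-1)..<b] = [i..<b]" by (simp only: i1)
      also have "[i..<b] = i # [Suc i..<b]" by (rule upt_conv_Cons) (use ai in simp)
      finally show ?thesis by simp
    qed
    ultimately show ?thesis by (simp add: FXplus_def W_def Z_def a_def b_def)
  qed
  have Zcases: "(b = i + 1 \<and> Z = F (i+1)) \<or> (i + 1 < b \<and> Z = qbr phi qq (F (i+1)) (foldr ?f [i+2..<b] (F b)))"
  proof (cases "b = i + 1")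
    case True then show ?thesis by (simp add: Z_def)
  next
    case False
    then have "i + 1 < b" using ai by simp
    then have "[i+1..<b] = (i+1) # [i+2..<b]" by (simp add: upt_conv_Cons)
    then show ?thesis using \<open>i + 1 < b\<close> by (simp add: Z_def)
  qed
  have EZ: "E i * Z = Z * E i" unfolding Z_def
    by (rule comm_fold[OF sm]) (use ai bn in \<open>auto intro!: EFc\<close>)
  have xZ: "F (i-1) * Z = Z * F (i-1)" unfolding Z_def
    by (rule comm_fold[OF sm]) (use ai a2 bn in \<open>auto intro!: FFc\<close>)
  have KpZ: "K (sroot n i) * Z = phi qq * Z * K (sroot n i)"
    using Zcases
  proof
    assume "b = i + 1 \<and> Z = F (i+1)" then show ?thesis using Kp_next by simp
  next
    assume h: "i + 1 < b \<and> Z = qbr phi qq (F (i+1)) (foldr ?f [i+2..<b] (F b))"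
    show ?thesis unfolding h[THEN conjunct2]
      by (rule shift_fold[OF sm Kp_next]) (use h bn a2 ai in \<open>auto intro!: Kp_far\<close>)
  qed
  have KmZ: "K (\<lambda>k. - sroot n i k) * Z = phi (inverse qq) * Z * K (\<lambda>k. - sroot n i k)"
    using Zcases
  proof
    assume "b = i + 1 \<and> Z = F (i+1)" then show ?thesis using Km_next by simp
  next
    assume h: "i + 1 < b \<and> Z = qbr phi qq (F (i+1)) (foldr ?f [i+2..<b] (F b))"
    show ?thesis unfolding h[THEN conjunct2]
      by (rule shift_fold[OF sm Km_next]) (use h bn a2 ai in \<open>auto intro!: Km_far\<close>)
  qed
  have QQi: "phi qq * phi (inverse qq) = 1"
  proof -
    have "phi qq * phi (inverse qq) = phi (qq * inverse qq)" by (simp only: sm_facts(4)[OF sm])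
    also have "(qq::'k qfield) * inverse qq = 1" using qq_nz[where 'k='k] by simp
    finally show ?thesis using sm_facts(7)[OF sm] by simp
  qed
  have EW: "E i * W = W * E i"
    unfolding W_def qbr_def
    by (rule E_comp[OF cen cen cen EFc[of "i-1"] EZ Ey KpZ KmZ Km_prev xZ QQi]) (use ai a2 bn in auto)
  have FW: "F i * W = W * F i"
  proof -
    have S1: "serre phi (F i) (F (i-1)) = 0"
    proof -
      have "cartan i (i-1) = -1" using ai a2 by (simp add: cartan_def)
      moreover have "i - 1 \<in> {1..n}" using ai a2 bn by auto
      ultimately show ?thesis using SR iI by blast
    qed
    have S2: "serre phi (F i) (F (i+1)) = 0"
    proof -
      have "cartan i (i+1) = -1" by (simp add: cartan_def)
      moreover have "i + 1 \<in> {1..n}" using ai a2 bn by auto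
      ultimately show ?thesis using SR iI by blast
    qed
    have xz: "F (i-1) * F (i+1) = F (i+1) * F (i-1)" by (rule FFc) (use ai a2 bn in auto)
    have V: "F i * qbr phi qq (F (i-1)) (qbr phi qq (F i) (F (i+1))) = qbr phi qq (F (i-1)) (qbr phi qq (F i) (F (i+1))) * F i"
      by (rule serre_comm[OF sm S1 S2 xz])
    from Zcases show ?thesis
    proof
      assume "b = i + 1 \<and> Z = F (i+1)" then show ?thesis using V by (simp add: W_def)
    next
      assume h: "i + 1 < b \<and> Z = qbr phi qq (F (i+1)) (foldr ?f [i+2..<b] (F b))"
      define w where "w = foldr ?f [i+2..<b] (F b)"
      have xw: "F (i-1) * w = w * F (i-1)" unfolding w_def
        by (rule comm_fold[OF sm]) (use ai a2 bn h in \<open>auto intro!: FFc\<close>)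
      have yw: "F i * w = w * F i" unfolding w_def
        by (rule comm_fold[OF sm]) (use ai a2 bn h in \<open>auto intro!: FFc\<close>)
      have "W = qbr phi qq (qbr phi qq (F (i-1)) (qbr phi qq (F i) (F (i+1)))) w"
        unfolding W_def h[THEN conjunct2] w_def[symmetric] by (rule reassoc_qbr[OF sm xw yw])
      then show ?thesis using comm_qbr[OF sm V yw] by simp
    qed
  qed
  have E1: "E i * FXplus phi F n r = FXplus phi F n r * E i" unfolding FXeq
    by (rule comm_fold[OF sm]) (use ai a2 bn EW in \<open>auto intro!: EFc\<close>)
  have F1: "F i * FXplus phi F n r = FXplus phi F n r * F i" unfolding FXeq
    by (rule comm_fold[OF sm]) (use ai a2 bn iI FW in \<open>auto intro!: FFc\<close>)
  show ?thesis using E1 F1 by simp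
qed

end
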